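(* Let $F$ be the elementary cellular automaton with rule number 27. For every nonempty finite word $u\in\{0,1\}^*$, the deterministic communication complexity of $\textsc{SInv}_{F,u}$ restricted to inputs of length $n$ is bounded by a constant independent of $n$.
   Context: An elementary cellular automaton (ECA) with rule number $N\in\{0,\dots,255\}$ is the map $F:\{0,1\}^{\mathbb Z}\to\{0,1\}^{\mathbb Z}$ given by $F(x)_i=f(x_{i-1},x_i,x_{i+1})$. Here the local rule $f:\{0,1\}^3\to\{0,1\}$ is determined by $N=\sum_{a,b,c\in\{0,1\}}2^{4a+2b+c}f(a,b,c)$. For a nonempty finite word $u$, $p_u\in\{0,1\}^{\mathbb Z}$ is defined by $(p_u)_i=u_{i\bmod |u|}$. For a finite word $x$, $p_u[x]$ is the configuration equal to $x$ on positions $0,\dots,|x|-1$ and to $p_u$ elsewhere. $\textsc{SInv}_{F,u}$ is the decision problem: on input a finite word $x$, decide whether there is an integer $w$ such that for all $t\ge0$ the set of positions where $F^t(p_u)$ and $F^t(p_u[x])$ differ is contained in an interval of length $w$. For each $n$, it is regarded as a function $\{0,1\}^n\to\{0,1\}$. For a function $g:X\times Y\to Z$, $D(g)$ is the minimal depth of a deterministic two-party protocol computing $g$. In such a protocol, Alice knows $x$ and Bob knows $y$. The protocol is a binary tree: each internal node is labelled by a function of Alice's input only or of Bob's input only, with values in $\{\text{left},\text{right}\}$, and each leaf is labelled by an output value. For $g:\{0,1\}^m\to Z$, set $D(g)=\max_{0\le i<m}D(g_i)$, where $g_i:\{0,1\}^i\times\{0,1\}^{m-i}\to Z$ is $g_i(x,y)=g(xy)$.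 *)

theory Defs
  imports Main
begin

type_synonym config = "int \<Rightarrow> bool"

definition eca_local :: "nat \<Rightarrow> bool \<Rightarrow> bool \<Rightarrow> bool \<Rightarrow> bool" where
  "eca_local N a b c = bit N (4 * of_bool a + 2 * of_bool b + of_bool c)"

definition eca :: "nat \<Rightarrow> config \<Rightarrow> config" where
  "eca N x = (\<lambda>i. eca_local N (x (i - 1)) (x i) (x (i + 1)))"

definition pconf :: "bool list \<Rightarrow> config" where
  "pconf u = (\<lambda>i. u ! nat (i mod int (length u)))"

definition patch :: "bool list \<Rightarrow> bool list \<Rightarrow> config" where
  "patch u x = (\<lambda>i. if 0 \<le> i \<and> i < int (length x) then x ! nat i else pconf u i)"

definition SInv :: "nat \<Rightarrow> bool list \<Rightarrow> bool list \<Rightarrow> bool" where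
  "SInv N u x = (\<exists>w::int. \<forall>t::nat. \<exists>a::int.
      {i. (eca N ^^ t) (pconf u) i \<noteq> (eca N ^^ t) (patch u x) i} \<subseteq> {a..<a + w})"

datatype protocol =
    Leaf bool
  | Alice "bool list \<Rightarrow> bool" protocol protocol
  | Bob "bool list \<Rightarrow> bool" protocol protocol

fun run :: "protocol \<Rightarrow> bool list \<Rightarrow> bool list \<Rightarrow> bool" where
  "run (Leaf z) x y = z"
| "run (Alice f l r) x y = (if f x then run r x y else run l x y)"
| "run (Bob f l r) x y = (if f y then run r x y else run l x y)"

fun depth :: "protocol \<Rightarrow> nat" where
  "depth (Leaf z) = 0"
| "depth (Alice f l r) = Suc (max (depth l) (depth r))"
| "depth (Bob f l r) = Suc (max (depth l) (depth r))"

definition computes :: "protocol \<Rightarrow> (bool list \<Rightarrow> bool) \<Rightarrow> nat \<Rightarrow> nat \<Rightarrow> bool" where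
  "computes P g m i = (\<forall>x y. length x = i \<longrightarrow> length y = m - i \<longrightarrow> run P x y = g (x @ y))"

definition Dcut :: "(bool list \<Rightarrow> bool) \<Rightarrow> nat \<Rightarrow> nat \<Rightarrow> nat" where
  "Dcut g m i = (LEAST d. \<exists>P. computes P g m i \<and> depth P = d)"

definition D :: "(bool list \<Rightarrow> bool) \<Rightarrow> nat \<Rightarrow> nat" where
  "D g m = (if m = 0 then 0 else Max (Dcut g m ` {..<m}))"

end

theory Submission
  imports Defs
begin


lemma loc27: "eca_local 27 a b c = (if c then \<not> a else \<not> b)"
  by (cases a; cases b; cases c) (simp_all add: eca_local_def bit_nat_def)

definition gl :: "bool \<Rightarrow> bool \<Rightarrow> bool \<Rightarrow> bool \<Rightarrow> bool \<Rightarrow> bool" where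
  "gl a b c d e = (if \<not> b \<and> c \<and> \<not> d \<and> (a \<or> e) then True
      else if \<not> a \<and> b \<and> c \<and> \<not> d \<and> \<not> e then False else b)"

definition Gm :: "config \<Rightarrow> config" where
  "Gm c = (\<lambda>j. gl (c (j-1)) (c j) (c (j+1)) (c (j+2)) (c (j+3)))"

lemma F2: "eca 27 (eca 27 c) i = Gm c (i - 1)"
proof -
  have e: "\<And>j. eca 27 c j = (if c (j+1) then \<not> c (j-1) else \<not> c j)"
    by (simp add: eca_def loc27)
  have "eca 27 (eca 27 c) i = (if eca 27 c (i+1) then \<not> eca 27 c (i-1) else \<not> eca 27 c i)"
    by (simp add: eca_def loc27)
  also have "\<dots> = (if (if c (i+2) then \<not> c i else \<not> c (i+1)) then \<not> (if c i then \<not> c (i-2) else \<not> c (i-1))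
       else \<not> (if c (i+1) then \<not> c (i-1) else \<not> c i))"
    unfolding e by (simp add: algebra_simps)
  also have "\<dots> = Gm c (i - 1)"
    by (simp add: Gm_def gl_def algebra_simps) (cases "c (i-2)"; cases "c (i-1)"; cases "c i"; cases "c (i+1)"; cases "c (i+2)"; simp)
  finally show ?thesis .
qed


definition act :: "config \<Rightarrow> int \<Rightarrow> bool" where
  "act c j = (\<not> c (j-1) \<and> c (j+1) \<and> \<not> c (j+2))"

definition Gp :: "config \<Rightarrow> config" where
  "Gp c = (\<lambda>j. if act c j then c (j+3) else c j)"

definition nf :: "config \<Rightarrow> bool" where
  "nf c = (\<forall>j. \<not> (c j \<and> \<not> c (j+1) \<and> c (j+2) \<and> \<not> c (j+3)))"

lemma nf_Gm: "nf (Gm c)"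
  unfolding nf_def
proof
  fix j
  have e: "Gm c j = gl (c (j-1)) (c j) (c (j+1)) (c (j+2)) (c (j+3))"
    "Gm c (j+1) = gl (c j) (c (j+1)) (c (j+2)) (c (j+3)) (c (j+4))"
    "Gm c (j+2) = gl (c (j+1)) (c (j+2)) (c (j+3)) (c (j+4)) (c (j+5))"
    "Gm c (j+3) = gl (c (j+2)) (c (j+3)) (c (j+4)) (c (j+5)) (c (j+6))"
    by (simp_all add: Gm_def algebra_simps)
  show "\<not> (Gm c j \<and> \<not> Gm c (j+1) \<and> Gm c (j+2) \<and> \<not> Gm c (j+3))"
    unfolding e gl_def
    by (cases "c (j-1)"; cases "c j"; cases "c (j+1)"; cases "c (j+2)"; cases "c (j+3)";
        cases "c (j+4)"; cases "c (j+5)"; cases "c (j+6)"; simp)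
qed

lemma Gm_Gp: assumes "nf c" shows "Gm c = Gp c"
proof
  fix j
  have n1: "\<not> (c (j-1) \<and> \<not> c j \<and> c (j+1) \<and> \<not> c (j+2))"
    using assms[unfolded nf_def, rule_format, of "j-1"] by (simp add: algebra_simps)
  have n2: "\<not> (c j \<and> \<not> c (j+1) \<and> c (j+2) \<and> \<not> c (j+3))"
    using assms[unfolded nf_def, rule_format, of "j"] by simp
  show "Gm c j = Gp c j"
    using n1 n2 unfolding Gm_def Gp_def act_def gl_def
    by (cases "c (j-1)"; cases "c j"; cases "c (j+1)"; cases "c (j+2)"; cases "c (j+3)"; simp)
qed

lemma act_Gp: "act (Gp c) j = act c j"
proof -
  have e: "Gp c (j-1) = (if \<not> c (j-2) \<and> c j \<and> \<not> c (j+1) then c (j+2) else c (j-1))"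
    "Gp c (j+1) = (if \<not> c j \<and> c (j+2) \<and> \<not> c (j+3) then c (j+4) else c (j+1))"
    "Gp c (j+2) = (if \<not> c (j+1) \<and> c (j+3) \<and> \<not> c (j+4) then c (j+5) else c (j+2))"
    by (simp_all add: Gp_def act_def algebra_simps)
  show ?thesis unfolding act_def e
    by (cases "c (j-2)"; cases "c (j-1)"; cases "c j"; cases "c (j+1)"; cases "c (j+2)"; cases "c (j+3)";
        cases "c (j+4)"; cases "c (j+5)"; simp)
qed

definition ev :: "config \<Rightarrow> nat \<Rightarrow> config" where
  "ev c t = (Gp ^^ t) c"

lemma ev_0[simp]: "ev c 0 = c" by (simp add: ev_def)

lemma ev_act[simp]: "act (ev c t) = act c"
  by (induction t) (auto simp: ev_def act_Gp fun_eq_iff)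

lemma ev_Suc: "ev c (Suc t) j = (if act c j then ev c t (j+3) else ev c t j)"
proof -
  have "ev c (Suc t) = Gp (ev c t)" by (simp add: ev_def)
  then show ?thesis by (simp add: Gp_def)
qed

lemma ev_nact: "\<not> act c j \<Longrightarrow> ev c t j = c j"
  by (induction t) (simp_all add: ev_Suc)

lemma ev_nf: "nf (ev (Gm c) t)"
proof (induction t)
  case 0 then show ?case by (simp add: nf_Gm)
next
  case (Suc t)
  have "ev (Gm c) (Suc t) = Gp (ev (Gm c) t)" by (simp add: ev_def)
  also have "\<dots> = Gm (ev (Gm c) t)" using Gm_Gp[OF Suc] by simp
  finally show ?case by (simp add: nf_Gm)
qed

lemma Gm_shift: "Gm (\<lambda>i. d (i - s)) j = Gm d (j - s)"
  by (simp add: Gm_def algebra_simps)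

lemma iterF: "(eca 27 ^^ (2*t+2)) c i = ev (Gm c) t (i - int t - 1)"
proof (induction t arbitrary: i)
  case 0
  then show ?case by (simp add: F2 numeral_2_eq_2)
next
  case (Suc t)
  define d where "d = (eca 27 ^^ (2*t+2)) c"
  have dd: "d = (\<lambda>i. ev (Gm c) t (i - int t - 1))" using Suc by (simp add: d_def fun_eq_iff)
  have "(eca 27 ^^ (2 * Suc t + 2)) c = eca 27 (eca 27 d)"
    by (simp add: d_def)
  then have "(eca 27 ^^ (2 * Suc t + 2)) c i = Gm d (i - 1)" by (simp add: F2)
  also have "\<dots> = Gm (ev (Gm c) t) (i - 1 - (int t + 1))"
    unfolding dd using Gm_shift[of "ev (Gm c) t" "int t + 1" "i - 1"] by (simp add: algebra_simps)
  also have "\<dots> = Gp (ev (Gm c) t) (i - 1 - (int t + 1))" using Gm_Gp[OF ev_nf] by simp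
  also have "\<dots> = ev (Gm c) (Suc t) (i - int (Suc t) - 1)" by (simp add: ev_def algebra_simps)
  finally show ?case .
qed

lemma chain_fin:
  "(\<forall>m<k. act c (p + 3 * int m)) \<Longrightarrow> \<not> act c (p + 3 * int k) \<Longrightarrow> ev c t p = c (p + 3 * int (min t k))"
proof (induction k arbitrary: p t)
  case 0 then show ?case by (simp add: ev_nact)
next
  case (Suc k)
  have a0: "act c p" using Suc.prems(1)[rule_format, of 0] by simp
  show ?case
  proof (cases t)
    case 0 then show ?thesis by simp
  next
    case (Suc s)
    have h1: "\<forall>m<k. act c (p + 3 + 3 * int m)"
      using Suc.prems(1) by (auto simp: algebra_simps)
    have h2: "\<not> act c (p + 3 + 3 * int k)" using Suc.prems(2) by (simp add: algebra_simps)
    have "ev c t p = ev c s (p + 3)" using a0 Suc by (simp add: ev_Suc)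
    also have "\<dots> = c (p + 3 + 3 * int (min s k))" using Suc.IH[OF h1 h2] .
    finally show ?thesis using Suc by (simp add: algebra_simps)
  qed
qed

lemma chain_inf: "(\<forall>m. act c (p + 3 * int m)) \<Longrightarrow> ev c t p = c (p + 3 * int t)"
proof (induction t arbitrary: p)
  case 0 then show ?case by simp
next
  case (Suc t)
  have a0: "act c p" using Suc.prems[rule_format, of 0] by simp
  have h1: "\<forall>m. act c (p + 3 + 3 * int m)"
    using Suc.prems by (metis (no_types, opaque_lifting) add.assoc distrib_left int_ops(4) mult.right_neutral add.commute)
  have "ev c (Suc t) p = ev c t (p + 3)" using a0 by (simp add: ev_Suc)
  also have "\<dots> = c (p + 3 + 3 * int t)" using Suc.IH[OF h1] .
  finally show ?case by (simp add: algebra_simps)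
qed

definition DG :: "bool list \<Rightarrow> bool list \<Rightarrow> nat \<Rightarrow> int set" where
  "DG u z t = {j. ev (Gm (pconf u)) t j \<noteq> ev (Gm (patch u z)) t j}"

definition DF :: "bool list \<Rightarrow> bool list \<Rightarrow> nat \<Rightarrow> int set" where
  "DF u z s = {i. (eca 27 ^^ s) (pconf u) i \<noteq> (eca 27 ^^ s) (patch u z) i}"

definition bnd :: "(nat \<Rightarrow> int set) \<Rightarrow> bool" where
  "bnd S = (\<exists>w. \<forall>t. \<exists>a. S t \<subseteq> {a..<a+w})"

lemma SInv_DF: "SInv 27 u z = bnd (DF u z)"
  by (simp add: SInv_def bnd_def DF_def)

lemma DF_even: "DF u z (2*t+2) = {i. i - int t - 1 \<in> DG u z t}"
  unfolding DF_def DG_def iterF by simp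

lemma DF_Suc: "DF u z (Suc s) \<subseteq> {i. i - 1 \<in> DF u z s \<or> i \<in> DF u z s \<or> i + 1 \<in> DF u z s}"
proof
  fix i assume i: "i \<in> DF u z (Suc s)"
  show "i \<in> {i. i - 1 \<in> DF u z s \<or> i \<in> DF u z s \<or> i + 1 \<in> DF u z s}"
  proof (rule ccontr)
    assume "i \<notin> {i. i - 1 \<in> DF u z s \<or> i \<in> DF u z s \<or> i + 1 \<in> DF u z s}"
    then have "(eca 27 ^^ s) (pconf u) (i-1) = (eca 27 ^^ s) (patch u z) (i-1)"
      "(eca 27 ^^ s) (pconf u) i = (eca 27 ^^ s) (patch u z) i"
      "(eca 27 ^^ s) (pconf u) (i+1) = (eca 27 ^^ s) (patch u z) (i+1)"
      by (auto simp: DF_def)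
    then have "(eca 27 ^^ Suc s) (pconf u) i = (eca 27 ^^ Suc s) (patch u z) i"
      by (simp add: eca_def)
    then show False using i by (simp add: DF_def)
  qed
qed

lemma DF_0: "DF u z 0 \<subseteq> {0..<int (length z)}"
  by (auto simp: DF_def patch_def)

lemma SInv_DG: "SInv 27 u z = bnd (DG u z)"
proof
  assume "SInv 27 u z"
  then obtain w where w: "\<forall>s. \<exists>a. DF u z s \<subseteq> {a..<a+w}" by (auto simp: SInv_DF bnd_def)
  show "bnd (DG u z)" unfolding bnd_def
  proof (rule exI[of _ w], intro allI)
    fix t
    obtain a where a: "DF u z (2*t+2) \<subseteq> {a..<a+w}" using w by blast
    have "DG u z t \<subseteq> {a - int t - 1..<a - int t - 1 + w}"
    proof
      fix j assume "j \<in> DG u z t"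
      then have "j + int t + 1 \<in> DF u z (2*t+2)" by (subst DF_even) simp
      then show "j \<in> {a - int t - 1..<a - int t - 1 + w}" using a by auto
    qed
    then show "\<exists>a. DG u z t \<subseteq> {a..<a+w}" by blast
  qed
next
  assume "bnd (DG u z)"
  then obtain w where w: "\<forall>t. \<exists>a. DG u z t \<subseteq> {a..<a+w}" by (auto simp: bnd_def)
  define n where "n = int (length z)"
  define W where "W = max (w+2) (n+2)"
  have ev: "\<exists>a. DF u z (2*t+2) \<subseteq> {a..<a+w}" for t
  proof -
    obtain a where a: "DG u z t \<subseteq> {a..<a+w}" using w by blast
    have "DF u z (2*t+2) \<subseteq> {a + int t + 1..<a + int t + 1 + w}"
      unfolding DF_even using a by force
    then show ?thesis by blast
  qed
  have step: "\<exists>a. DF u z (Suc s) \<subseteq> {a..<a+v+2}" if "DF u z s \<subseteq> {b..<b+v}" for s b v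
  proof -
    have "DF u z (Suc s) \<subseteq> {b - 1..<b - 1 + v + 2}"
      using DF_Suc[of u z s] that by force
    then show ?thesis by blast
  qed
  have "\<exists>a. DF u z s \<subseteq> {a..<a+W}" for s
  proof -
    have mono: "\<exists>a. DF u z s \<subseteq> {a..<a+W}" if "DF u z s \<subseteq> {a..<a+v}" "v \<le> W" for a v
      using that by (intro exI[of _ a]) auto
    consider "s = 0" | "s = 1" | t where "s = 2*t+2" | t where "s = Suc (2*t+2)"
    proof -
      have "s = 0 \<or> s = 1 \<or> (\<exists>t. s = 2*t+2) \<or> (\<exists>t. s = Suc (2*t+2))" by presburger
      then show ?thesis using that by blast
    qed
    then show ?thesis
    proof cases
      case 1
      then show ?thesis using DF_0[of u z] by (intro mono[of 0 n]) (auto simp: n_def W_def)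
    next
      case 2
      obtain a where "DF u z (Suc 0) \<subseteq> {a..<a+n+2}"
        using step[of 0 0 n] DF_0[of u z] n_def by auto
      then show ?thesis using 2 by (intro mono[of a "n+2"]) (auto simp: W_def)
    next
      case 3
      then show ?thesis using ev[of t] mono W_def by force
    next
      case 4
      obtain b where "DF u z (2*t+2) \<subseteq> {b..<b+w}" using ev by blast
      then obtain a where "DF u z (Suc (2*t+2)) \<subseteq> {a..<a+w+2}" using step by blast
      then show ?thesis using 4 by (intro mono[of a "w+2"]) (auto simp: W_def)
    qed
  qed
  then show "SInv 27 u z" by (auto simp: SInv_DF bnd_def)
qed



lemma act_excl1: "act c j \<Longrightarrow> \<not> act c (j+1)" by (simp add: act_def algebra_simps)
lemma act_excl2: "act c j \<Longrightarrow> \<not> act c (j+2)" by (simp add: act_def algebra_simps)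
lemma act_next: "act c j \<Longrightarrow> c (j+1)" by (simp add: act_def)
lemma act_prev: "act c j \<Longrightarrow> \<not> c (j-1)" by (simp add: act_def)

lemma least_int:
  fixes P :: "int \<Rightarrow> bool"
  assumes "P b" "\<forall>x. P x \<longrightarrow> L \<le> x"
  shows "\<exists>b0. P b0 \<and> (\<forall>x. P x \<longrightarrow> b0 \<le> x)"
proof -
  define m0 where "m0 = (LEAST m::nat. P (L + int m))"
  have ex: "P (L + int (nat (b - L)))" using assms by simp
  have p0: "P (L + int m0)" unfolding m0_def by (rule LeastI[where P="\<lambda>m. P (L + int m)", OF ex])
  have "L + int m0 \<le> x" if "P x" for x
  proof -
    have "L \<le> x" using assms that by blast
    then have "P (L + int (nat (x - L)))" using that by simp
    then have "m0 \<le> nat (x - L)" unfolding m0_def by (rule Least_le[where P="\<lambda>m. P (L + int m)"])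
    then show ?thesis using \<open>L \<le> x\<close> by linarith
  qed
  then show ?thesis using p0 by blast
qed

definition P1 :: "bool list \<Rightarrow> config" where "P1 u = Gm (pconf u)"
definition Q1 :: "bool list \<Rightarrow> bool list \<Rightarrow> config" where "Q1 u z = Gm (patch u z)"

lemma Gm_local: "(\<And>k. j - 1 \<le> k \<Longrightarrow> k \<le> j + 3 \<Longrightarrow> c k = d k) \<Longrightarrow> Gm c j = Gm d j"
  by (simp add: Gm_def)

lemma act_local: "(\<And>k. j - 1 \<le> k \<Longrightarrow> k \<le> j + 2 \<Longrightarrow> c k = d k) \<Longrightarrow> act c j = act d j"
  by (simp add: act_def)

lemma patch_out: "j < 0 \<or> int (length z) \<le> j \<Longrightarrow> patch u z j = pconf u j"
  by (auto simp: patch_def)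

lemma Q1_out: "j \<le> -4 \<or> int (length z) + 1 \<le> j \<Longrightarrow> Q1 u z j = P1 u j"
  unfolding Q1_def P1_def by (rule Gm_local) (auto intro!: patch_out)

lemma actQ_out: "j \<le> -6 \<or> int (length z) + 2 \<le> j \<Longrightarrow> act (Q1 u z) j = act (P1 u) j"
  by (rule act_local) (auto intro!: Q1_out)

lemma pconf_per: "u \<noteq> [] \<Longrightarrow> pconf u (j + int (length u) * m) = pconf u j"
  by (simp add: pconf_def)

lemma Gm_per: assumes "\<And>x. c (x + s) = c x" shows "Gm c (j + s) = Gm c j"
proof -
  have "c (j + s - 1) = c (j - 1)" "c (j + s) = c j" "c (j + s + 1) = c (j + 1)"
    "c (j + s + 2) = c (j + 2)" "c (j + s + 3) = c (j + 3)"
    using assms[of "j - 1"] assms[of j] assms[of "j+1"] assms[of "j+2"] assms[of "j+3"]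
    by (simp_all add: algebra_simps)
  then show ?thesis by (simp add: Gm_def)
qed

lemma act_per: assumes "\<And>x. c (x + s) = c x" shows "act c (j + s) = act c j"
proof -
  have "c (j + s - 1) = c (j - 1)" "c (j + s + 1) = c (j + 1)" "c (j + s + 2) = c (j + 2)"
    using assms[of "j - 1"] assms[of "j+1"] assms[of "j+2"]
    by (simp_all add: algebra_simps)
  then show ?thesis by (simp add: act_def)
qed

lemma P1_per: "u \<noteq> [] \<Longrightarrow> P1 u (j + int (length u) * m) = P1 u j"
  unfolding P1_def by (rule Gm_per) (rule pconf_per)

lemma actP_per: "u \<noteq> [] \<Longrightarrow> act (P1 u) (j + int (length u) * m) = act (P1 u) j"
  by (rule act_per) (rule P1_per)

definition T3 :: "bool list \<Rightarrow> bool" where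
  "T3 u = (\<exists>r. \<forall>k::int. act (P1 u) (r + 3*k))"
definition rr :: "bool list \<Rightarrow> int" where
  "rr u = (SOME r. \<forall>k::int. act (P1 u) (r + 3*k))"
definition cls :: "bool list \<Rightarrow> int \<Rightarrow> bool" where
  "cls u q = (3 dvd (q - rr u))"
definition oddQ :: "bool list \<Rightarrow> bool list \<Rightarrow> int \<Rightarrow> bool" where
  "oddQ u z i = (\<exists>j. cls u j \<and> Q1 u z i \<noteq> P1 u j)"
definition Fail :: "bool list \<Rightarrow> bool list \<Rightarrow> bool" where
  "Fail u z = (\<exists>i b. cls u i \<and> cls u b \<and> i \<le> b \<and> oddQ u z i \<and> \<not> act (Q1 u z) b \<and>
      (\<forall>q. cls u q \<and> q < i \<longrightarrow> act (Q1 u z) q))"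

lemma bnd_I: "(\<And>t. S t \<subseteq> {f t..<f t + w}) \<Longrightarrow> bnd S"
  unfolding bnd_def by blast

lemma bnd_fix: "(\<And>t. S t \<subseteq> {a..<b}) \<Longrightarrow> bnd S"
  by (rule bnd_I[where f="\<lambda>_. a" and w="b - a"]) auto

context
  fixes u z :: "bool list"
  assumes un: "u \<noteq> []"
begin

lemma right_agree: "int (length z) + 2 \<le> j \<Longrightarrow> ev (Q1 u z) t j = ev (P1 u) t j"
proof (induction t arbitrary: j)
  case 0 then show ?case by (simp add: Q1_out)
next
  case (Suc t)
  then show ?case by (simp add: ev_Suc actQ_out)
qed

lemma left_agree: "p + 3 * int k \<le> -6 \<Longrightarrow> \<not> act (P1 u) (p + 3 * int k) \<Longrightarrow> ev (Q1 u z) t p = ev (P1 u) t p"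
proof (induction k arbitrary: p t)
  case 0
  then have "\<not> act (Q1 u z) p" using actQ_out by simp
  then show ?case using 0 by (simp add: ev_nact Q1_out)
next
  case (Suc k)
  show ?case
  proof (cases "act (P1 u) p")
    case False
    then have "\<not> act (Q1 u z) p" using actQ_out Suc.prems by simp
    then show ?thesis using False Suc.prems by (simp add: ev_nact Q1_out)
  next
    case True
    then have aq: "act (Q1 u z) p" using actQ_out Suc.prems by simp
    show ?thesis
    proof (cases t)
      case 0 then show ?thesis using Suc.prems by (simp add: Q1_out)
    next
      case (Suc s)
      have "ev (Q1 u z) s (p+3) = ev (P1 u) s (p+3)"
        using Suc.IH[of "p+3" s] Suc.prems by (simp add: algebra_simps)
      then show ?thesis using Suc True aq by (simp add: ev_Suc)
    qed
  qed
qed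

lemma notT3_break: assumes "\<not> T3 u" shows "\<exists>k < length u. \<not> act (P1 u) (p + 3 * int k)"
proof (rule ccontr)
  assume "\<not> ?thesis"
  then have h: "\<forall>k < length u. act (P1 u) (p + 3 * int k)" by blast
  let ?N = "int (length u)"
  have "act (P1 u) (p + 3*k)" for k :: int
  proof -
    have N0: "?N > 0" using un by simp
    have s0: "0 \<le> k mod ?N" "k mod ?N < ?N" using N0 by auto
    have "nat (k mod ?N) < length u" using s0 by linarith
    then have "act (P1 u) (p + 3 * int (nat (k mod ?N)))" using h by blast
    then have "act (P1 u) (p + 3 * (k mod ?N) + ?N * (3 * (k div ?N)))"
      using actP_per[OF un] s0 by simp
    moreover have "p + 3 * (k mod ?N) + ?N * (3 * (k div ?N)) = p + 3*k"
      by (metis add.assoc distrib_left mult.left_commute mod_mult_div_eq)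
    ultimately show ?thesis by simp
  qed
  then show False using assms by (auto simp: T3_def)
qed

lemma case1: assumes "\<not> T3 u" shows "bnd (DG u z)"
proof -
  let ?N = "int (length u)" and ?n = "int (length z)"
  have "DG u z t \<subseteq> {-5 - 3*?N..<?n+2}" for t
  proof
    fix j assume j: "j \<in> DG u z t"
    have "j < ?n + 2"
    proof (rule ccontr)
      assume "\<not> j < ?n + 2"
      then have "ev (Q1 u z) t j = ev (P1 u) t j" using right_agree by simp
      then show False using j by (simp add: DG_def Q1_def P1_def)
    qed
    moreover have "-5 - 3*?N \<le> j"
    proof (rule ccontr)
      assume "\<not> ?thesis"
      then have jl: "j \<le> -6 - 3*?N" by simp
      obtain k where k: "k < length u" "\<not> act (P1 u) (j + 3 * int k)" using notT3_break[OF assms] by blast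
      have "j + 3 * int k \<le> -6" using jl k(1) by linarith
      then have "ev (Q1 u z) t j = ev (P1 u) t j" using left_agree k(2) by blast
      then show False using j by (simp add: DG_def Q1_def P1_def)
    qed
    ultimately show "j \<in> {-5 - 3*?N..<?n+2}" by simp
  qed
  then show ?thesis by (rule bnd_fix)
qed

lemma DG_alt: "j \<in> DG u z t \<longleftrightarrow> ev (P1 u) t j \<noteq> ev (Q1 u z) t j"
  by (simp add: DG_def P1_def Q1_def)

lemma T3_r: "T3 u \<Longrightarrow> act (P1 u) (rr u + 3*k)"
  unfolding T3_def rr_def using someI_ex[of "\<lambda>r. \<forall>k. act (P1 u) (r + 3*k)"] by blast

lemma actP_cls: assumes "T3 u" shows "act (P1 u) q \<longleftrightarrow> cls u q"
proof
  assume "cls u q"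
  then obtain k where "q - rr u = 3 * k" by (auto simp: cls_def)
  then have "q = rr u + 3*k" by simp
  then show "act (P1 u) q" using T3_r[OF assms] by simp
next
  assume a: "act (P1 u) q"
  show "cls u q"
  proof (rule ccontr)
    assume nc: "\<not> cls u q"
    define k where "k = (q - rr u) div 3"
    have ak: "act (P1 u) (rr u + 3*k)" by (rule T3_r[OF assms])
    have "(q - rr u) mod 3 = 1 \<or> (q - rr u) mod 3 = 2" using nc by (auto simp: cls_def) presburger
    then show False
    proof
      assume "(q - rr u) mod 3 = 1"
      then have "q = rr u + 3*k + 1" unfolding k_def by presburger
      then show False using act_excl1[OF ak] a by simp
    next
      assume "(q - rr u) mod 3 = 2"
      then have "q = rr u + 3*k + 2" unfolding k_def by presburger
      then show False using act_excl2[OF ak] a by simp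
    qed
  qed
qed

lemma cls_add3: "cls u (q + 3 * x) = cls u q"
  unfolding cls_def by (metis (no_types) add_diff_eq diff_add_eq dvd_add_left_iff dvd_triv_left add.commute)

lemma ncls_cases: "\<not> cls u q \<Longrightarrow> cls u (q - 1) \<or> cls u (q + 1)"
  unfolding cls_def by presburger

lemma case2: assumes t3: "T3 u" and nf: "\<not> Fail u z" shows "bnd (DG u z)"
proof (cases "\<forall>q. cls u q \<longrightarrow> act (Q1 u z) q")
  case True
  let ?n = "int (length z)"
  have nonc: "ev (P1 u) t q = ev (Q1 u z) t q" if nc: "\<not> cls u q" for q t
  proof -
    have np: "\<not> act (P1 u) q" using actP_cls[OF t3] nc by simp
    have nq: "\<not> act (Q1 u z) q"
    proof
      assume aq: "act (Q1 u z) q"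
      from ncls_cases[OF nc] show False
      proof
        assume "cls u (q - 1)"
        then have "act (Q1 u z) (q - 1)" using True by blast
        then show False using act_excl1 aq by fastforce
      next
        assume "cls u (q + 1)"
        then have "act (Q1 u z) (q + 1)" using True by blast
        then show False using act_excl1 aq by fastforce
      qed
    qed
    have "P1 u q = Q1 u z q"
      using ncls_cases[OF nc]
    proof
      assume c: "cls u (q - 1)"
      then have "act (Q1 u z) (q - 1)" "act (P1 u) (q - 1)" using True actP_cls[OF t3] by auto
      then show ?thesis using act_next by fastforce
    next
      assume c: "cls u (q + 1)"
      then have "act (Q1 u z) (q + 1)" "act (P1 u) (q + 1)" using True actP_cls[OF t3] by auto
      then show ?thesis using act_prev by fastforce
    qed
    then show ?thesis using np nq by (simp add: ev_nact)
  qed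
  have "DG u z t \<subseteq> {-3 - 3 * int t..<-3 - 3 * int t + (?n + 4)}" for t
  proof
    fix j assume j: "j \<in> DG u z t"
    then have c: "cls u j" using nonc DG_alt by blast
    have allc: "\<forall>m. cls u (j + 3 * int m)" using c cls_add3 by simp
    have "ev (Q1 u z) t j = Q1 u z (j + 3 * int t)"
      by (rule chain_inf) (use allc True in blast)
    moreover have "ev (P1 u) t j = P1 u (j + 3 * int t)"
      by (rule chain_inf) (use allc actP_cls[OF t3] in blast)
    ultimately have "Q1 u z (j + 3 * int t) \<noteq> P1 u (j + 3 * int t)" using j DG_alt by auto
    then have "-3 \<le> j + 3 * int t \<and> j + 3 * int t \<le> ?n" using Q1_out by fastforce
    then show "j \<in> {-3 - 3 * int t..<-3 - 3 * int t + (?n + 4)}" by simp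
  qed
  then show ?thesis by (rule bnd_I)
next
  case False
  let ?n = "int (length z)"
  let ?B = "\<lambda>b. cls u b \<and> \<not> act (Q1 u z) b"
  obtain b where b: "?B b" using False by blast
  have lb: "\<forall>x. ?B x \<longrightarrow> -5 \<le> x"
  proof (intro allI impI)
    fix x assume x: "?B x"
    show "-5 \<le> x"
    proof (rule ccontr)
      assume "\<not> -5 \<le> x"
      then have "act (Q1 u z) x = act (P1 u) x" using actQ_out by simp
      then show False using x actP_cls[OF t3] by simp
    qed
  qed
  obtain b0 where b0: "?B b0" "\<forall>x. ?B x \<longrightarrow> b0 \<le> x" using least_int[of ?B b, OF b lb] by blast
  have b0l: "-5 \<le> b0" using lb b0 by blast
  have clsagree: "ev (P1 u) t q = ev (Q1 u z) t q" if q: "cls u q" "q \<le> b0" for q t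
  proof -
    define k where "k = nat ((b0 - q) div 3)"
    have d: "3 dvd (b0 - q)" using q(1) b0(1) dvd_diff[of 3 "b0 - rr u" "q - rr u"] unfolding cls_def by simp
    have d2: "3 * ((b0 - q) div 3) = b0 - q" using d by simp
    have qk: "q + 3 * int k = b0" unfolding k_def using d2 q(2) by simp
    have ch: "\<forall>m<k. act (Q1 u z) (q + 3 * int m)"
    proof (intro allI impI)
      fix m assume "m < k"
      then have "q + 3 * int m < b0" using qk by linarith
      moreover have "cls u (q + 3 * int m)" using q cls_add3 by simp
      ultimately show "act (Q1 u z) (q + 3 * int m)" using b0(2) by force
    qed
    have eq: "ev (Q1 u z) t q = Q1 u z (q + 3 * int (min t k))"
      by (rule chain_fin) (use ch qk b0(1) in auto)
    define i' where "i' = q + 3 * int (min t k)"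
    have ci: "cls u i'" unfolding i'_def using q cls_add3 by simp
    have il: "i' \<le> b0" unfolding i'_def using qk by linarith
    have "\<not> oddQ u z i'"
    proof
      assume "oddQ u z i'"
      moreover have "\<forall>q'. cls u q' \<and> q' < i' \<longrightarrow> act (Q1 u z) q'" using b0(2) il by force
      ultimately have "Fail u z" unfolding Fail_def using ci b0(1) il by blast
      then show False using nf by simp
    qed
    then have iv: "\<forall>j. cls u j \<longrightarrow> Q1 u z i' = P1 u j" by (auto simp: oddQ_def)
    have "ev (P1 u) t q = P1 u (q + 3 * int t)"
      by (rule chain_inf) (use q cls_add3 actP_cls[OF t3] in auto)
    moreover have "cls u (q + 3 * int t)" using q cls_add3 by simp
    ultimately show ?thesis using eq iv unfolding i'_def by simp
  qed
  have "DG u z t \<subseteq> {-5..<?n+2}" for t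
  proof
    fix j assume j: "j \<in> DG u z t"
    have "j < ?n + 2"
    proof (rule ccontr)
      assume "\<not> j < ?n + 2"
      then have "ev (Q1 u z) t j = ev (P1 u) t j" using right_agree by simp
      then show False using j DG_alt by simp
    qed
    moreover have "-5 \<le> j"
    proof (rule ccontr)
      assume jl: "\<not> -5 \<le> j"
      show False
      proof (cases "cls u j")
        case True
        then show False using clsagree[of j t] jl b0l j DG_alt by simp
      next
        case False
        then have "\<not> act (P1 u) j" using actP_cls[OF t3] by simp
        moreover have "\<not> act (Q1 u z) j" using calculation actQ_out jl by simp
        ultimately have "ev (P1 u) t j = ev (Q1 u z) t j" using Q1_out jl by (simp add: ev_nact)
        then show False using j DG_alt by simp
      qed
    qed
    ultimately show "j \<in> {-5..<?n+2}" by simp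
  qed
  then show ?thesis by (rule bnd_fix)
qed

lemma case3: assumes t3: "T3 u" and fl: "Fail u z" shows "\<not> bnd (DG u z)"
proof -
  let ?N = "int (length u)"
  have N0: "?N > 0" using un by simp
  obtain i b where ib: "cls u i" "cls u b" "i \<le> b" "oddQ u z i" "\<not> act (Q1 u z) b"
    "\<forall>q. cls u q \<and> q < i \<longrightarrow> act (Q1 u z) q" using fl unfolding Fail_def by blast
  let ?B = "\<lambda>b. cls u b \<and> \<not> act (Q1 u z) b"
  have lb: "\<forall>x. ?B x \<longrightarrow> i \<le> x" using ib(6) by force
  obtain b0 where b0: "?B b0" "\<forall>x. ?B x \<longrightarrow> b0 \<le> x" using least_int[of ?B b i] ib lb by blast
  have ib0: "i \<le> b0" using lb b0 by blast
  have chQ: "ev (Q1 u z) t q = Q1 u z (min (q + 3 * int t) b0)" if q: "cls u q" "q \<le> b0" for q t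
  proof -
    define k where "k = nat ((b0 - q) div 3)"
    have d: "3 dvd (b0 - q)" using q(1) b0(1) dvd_diff[of 3 "b0 - rr u" "q - rr u"] unfolding cls_def by simp
    have d2: "3 * ((b0 - q) div 3) = b0 - q" using d by simp
    have qk: "q + 3 * int k = b0" unfolding k_def using d2 q(2) by simp
    have ch: "\<forall>m<k. act (Q1 u z) (q + 3 * int m)"
    proof (intro allI impI)
      fix m assume "m < k"
      then have "q + 3 * int m < b0" using qk by linarith
      moreover have "cls u (q + 3 * int m)" using q cls_add3 by simp
      ultimately show "act (Q1 u z) (q + 3 * int m)" using b0(2) by force
    qed
    have "ev (Q1 u z) t q = Q1 u z (q + 3 * int (min t k))"
      by (rule chain_fin) (use ch qk b0(1) in auto)
    moreover have "q + 3 * int (min t k) = min (q + 3 * int t) b0" using qk by (simp add: min_def)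
    ultimately show ?thesis by simp
  qed
  have chP: "ev (P1 u) t q = P1 u (q + 3 * int t)" if q: "cls u q" for q t
    by (rule chain_inf) (use q cls_add3 actP_cls[OF t3] in auto)
  have perm: "\<exists>d. b0 - 1 \<le> d \<and> d \<le> b0 + 2 \<and> d \<in> DG u z t" for t
  proof (rule ccontr)
    assume "\<not> ?thesis"
    then have "ev (P1 u) t d = ev (Q1 u z) t d" if "b0 - 1 \<le> d" "d \<le> b0 + 2" for d
      using that DG_alt by blast
    then have "act (ev (P1 u) t) b0 = act (ev (Q1 u z) t) b0" by (intro act_local) auto
    then show False using b0(1) actP_cls[OF t3] by simp
  qed
  have far: "\<exists>p. p \<le> b0 + 3 * ?N - 3 * int t \<and> p \<in> DG u z t" if tN: "length u \<le> t" for t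
  proof -
    obtain j where j: "cls u j" "Q1 u z i \<noteq> P1 u j" using ib(4) by (auto simp: oddQ_def)
    show ?thesis
    proof (cases "Q1 u z i = P1 u i")
      case False
      let ?p = "i - 3 * int t"
      have cp: "cls u ?p" using ib(1) cls_add3[of ?p "int t"] by simp
      have "ev (Q1 u z) t ?p = Q1 u z i" using chQ[OF cp] ib0 by (simp add: min_def)
      moreover have "ev (P1 u) t ?p = P1 u i" using chP[OF cp] by simp
      ultimately have "?p \<in> DG u z t" using False DG_alt by auto
      moreover have "?p \<le> b0 + 3 * ?N - 3 * int t" using ib0 N0 by simp
      ultimately show ?thesis by blast
    next
      case True
      have "P1 u i \<noteq> Q1 u z b0 \<or> P1 u j \<noteq> Q1 u z b0" using True j by auto
      then obtain y where y: "cls u y" "P1 u y \<noteq> Q1 u z b0" using j(1) ib(1) by blast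
      define y' where "y' = y + ?N * (- (3 * ((y - b0) div (3 * ?N))))"
      have yy: "y' = b0 + (y - b0) mod (3 * ?N)"
      proof -
        have e: "(y - b0) div (3 * ?N) * (3 * ?N) + (y - b0) mod (3 * ?N) = y - b0" by (rule div_mult_mod_eq)
        show ?thesis using e unfolding y'_def by (simp add: algebra_simps)
      qed
      have y1: "b0 \<le> y'" "y' < b0 + 3 * ?N" using yy N0 by auto
      have cy: "cls u y'" unfolding y'_def using y(1) cls_add3[of y "- (?N * ((y - b0) div (3 * ?N)))"]
        by (simp add: algebra_simps)
      have py: "P1 u y' = P1 u y" unfolding y'_def by (rule P1_per[OF un])
      let ?p = "y' - 3 * int t"
      have cp: "cls u ?p" using cy cls_add3[of ?p "int t"] by simp
      have pl: "?p \<le> b0" using y1 tN by linarith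
      have "ev (Q1 u z) t ?p = Q1 u z b0" using chQ[OF cp pl] y1 by (simp add: min_def)
      moreover have "ev (P1 u) t ?p = P1 u y'" using chP[OF cp] by simp
      ultimately have "?p \<in> DG u z t" using y(2) py DG_alt by auto
      moreover have "?p \<le> b0 + 3 * ?N - 3 * int t" using y1 by simp
      ultimately show ?thesis by blast
    qed
  qed
  show ?thesis
  proof
    assume "bnd (DG u z)"
    then obtain w where w: "\<forall>t. \<exists>a. DG u z t \<subseteq> {a..<a+w}" by (auto simp: bnd_def)
    define t where "t = length u + nat w + 1"
    obtain a where a: "DG u z t \<subseteq> {a..<a+w}" using w by blast
    obtain d where d: "b0 - 1 \<le> d" "d \<in> DG u z t" using perm by blast
    obtain p where p: "p \<le> b0 + 3 * ?N - 3 * int t" "p \<in> DG u z t" using far[of t] t_def by auto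
    have "a \<le> p" "d < a + w" using a d p by auto
    moreover have "int t = int (length u) + int (nat w) + 1" unfolding t_def by simp
    moreover have "w \<le> int (nat w)" by simp
    ultimately show False using p(1) d(1) by linarith
  qed
qed

theorem charac: "SInv 27 u z = (\<not> T3 u \<or> \<not> Fail u z)"
  using case1 case2 case3 SInv_DG by blast

end



fun chainP :: "('m \<Rightarrow> bool list \<Rightarrow> bool) \<Rightarrow> (bool list \<Rightarrow> 'm) \<Rightarrow> 'm list \<Rightarrow> protocol" where
  "chainP h a [] = Leaf False"
| "chainP h a (s#ss) = Alice (\<lambda>x. a x = s) (chainP h a ss) (Bob (h s) (Leaf False) (Leaf True))"

lemma chainP_depth: "depth (chainP h a ss) \<le> length ss + 1"
  by (induction ss) auto

lemma chainP_run: "a x \<in> set ss \<Longrightarrow> run (chainP h a ss) x y = h (a x) y"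
  by (induction ss) auto

lemma Dcut_le: "computes P g m i \<Longrightarrow> Dcut g m i \<le> depth P"
  unfolding Dcut_def by (rule Least_le) blast

lemma D_le: "(\<And>i. i < m \<Longrightarrow> Dcut g m i \<le> C) \<Longrightarrow> D g m \<le> C"
proof (cases "m = 0")
  case False
  assume h: "\<And>i. i < m \<Longrightarrow> Dcut g m i \<le> C"
  have "Max (Dcut g m ` {..<m}) \<le> C"
    by (rule Max.boundedI) (use False h in auto)
  then show ?thesis using False by (simp add: D_def)
qed (simp add: D_def)

lemma cut_bound:
  fixes a :: "bool list \<Rightarrow> 'm"
  assumes S: "finite S" and aS: "\<And>x. length x = i \<Longrightarrow> a x \<in> S"
    and gh: "\<And>x y. length x = i \<Longrightarrow> length y = m - i \<Longrightarrow> g (x @ y) = h (a x) y"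
  shows "Dcut g m i \<le> card S + 1"
proof -
  obtain ss where ss: "set ss = S" "distinct ss" using finite_distinct_list[OF S] by blast
  have "computes (chainP h a ss) g m i"
    unfolding computes_def
  proof (intro allI impI)
    fix x y :: "bool list" assume l: "length x = i" "length y = m - i"
    have "a x \<in> set ss" using aS[OF l(1)] ss(1) by simp
    then show "run (chainP h a ss) x y = g (x @ y)" using chainP_run gh[OF l] by simp
  qed
  then have "Dcut g m i \<le> depth (chainP h a ss)" by (rule Dcut_le)
  also have "\<dots> \<le> length ss + 1" by (rule chainP_depth)
  also have "length ss = card S" using distinct_card[OF ss(2)] ss(1) by simp
  finally show ?thesis .
qed

definition MS :: "(bool \<times> bool \<times> bool \<times> bool list) set" where
  "MS = UNIV \<times> UNIV \<times> UNIV \<times> {l. set l \<subseteq> UNIV \<and> length l \<le> 8}"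

lemma MS_fin: "finite MS"
  unfolding MS_def by (intro finite_cartesian_product finite_lists_length_le) auto



definition F1 :: "bool list \<Rightarrow> int \<Rightarrow> bool list \<Rightarrow> bool" where
  "F1 u K z = (\<exists>i b. cls u i \<and> cls u b \<and> i \<le> b \<and> b \<le> K \<and> oddQ u z i \<and> \<not> act (Q1 u z) b \<and>
      (\<forall>q. cls u q \<and> q < i \<longrightarrow> act (Q1 u z) q))"
definition F2 :: "bool list \<Rightarrow> int \<Rightarrow> bool list \<Rightarrow> bool" where
  "F2 u K z = (\<exists>i. cls u i \<and> i \<le> K \<and> oddQ u z i \<and> (\<forall>q. cls u q \<and> q < i \<longrightarrow> act (Q1 u z) q))"
definition AA :: "bool list \<Rightarrow> int \<Rightarrow> bool list \<Rightarrow> bool" where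
  "AA u K z = (\<forall>q. cls u q \<and> q \<le> K \<longrightarrow> act (Q1 u z) q)"
definition Bx :: "bool list \<Rightarrow> int \<Rightarrow> bool list \<Rightarrow> bool" where
  "Bx u K z = (\<exists>b. cls u b \<and> K < b \<and> \<not> act (Q1 u z) b)"
definition By :: "bool list \<Rightarrow> int \<Rightarrow> bool list \<Rightarrow> bool" where
  "By u K z = (\<exists>i b. cls u i \<and> cls u b \<and> K < i \<and> i \<le> b \<and> oddQ u z i \<and> \<not> act (Q1 u z) b \<and>
      (\<forall>q. cls u q \<and> K < q \<and> q < i \<longrightarrow> act (Q1 u z) q))"

lemma decomp: "Fail u z = (F1 u K z \<or> (F2 u K z \<and> Bx u K z) \<or> (AA u K z \<and> By u K z))"
proof
  assume "Fail u z"
  then obtain i b where w: "cls u i" "cls u b" "i \<le> b" "oddQ u z i" "\<not> act (Q1 u z) b"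
      "\<forall>q. cls u q \<and> q < i \<longrightarrow> act (Q1 u z) q" unfolding Fail_def by blast
  consider "b \<le> K" | "i \<le> K" "K < b" | "K < i" by linarith
  then show "F1 u K z \<or> (F2 u K z \<and> Bx u K z) \<or> (AA u K z \<and> By u K z)"
  proof cases
    case 1 then show ?thesis unfolding F1_def using w by blast
  next
    case 2 then show ?thesis unfolding F2_def Bx_def using w by blast
  next
    case 3
    have "AA u K z" unfolding AA_def using w 3 by force
    moreover have "By u K z" unfolding By_def using w 3 by blast
    ultimately show ?thesis by blast
  qed
next
  assume "F1 u K z \<or> (F2 u K z \<and> Bx u K z) \<or> (AA u K z \<and> By u K z)"
  then show "Fail u z"
  proof (elim disjE conjE)
    assume "F1 u K z" then show ?thesis unfolding F1_def Fail_def by blast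
  next
    assume "F2 u K z" "Bx u K z"
    then obtain i b where w: "cls u i" "i \<le> K" "oddQ u z i" "\<forall>q. cls u q \<and> q < i \<longrightarrow> act (Q1 u z) q"
      "cls u b" "K < b" "\<not> act (Q1 u z) b" unfolding F2_def Bx_def by blast
    have "i \<le> b" using w by linarith
    then show ?thesis unfolding Fail_def using w by blast
  next
    assume a: "AA u K z" "By u K z"
    then obtain i b where w: "cls u i" "cls u b" "K < i" "i \<le> b" "oddQ u z i" "\<not> act (Q1 u z) b"
      "\<forall>q. cls u q \<and> K < q \<and> q < i \<longrightarrow> act (Q1 u z) q" unfolding By_def by blast
    have "\<forall>q. cls u q \<and> q < i \<longrightarrow> act (Q1 u z) q"
    proof (intro allI impI)
      fix q assume q: "cls u q \<and> q < i"
      show "act (Q1 u z) q"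
      proof (cases "q \<le> K")
        case True then show ?thesis using a(1) q unfolding AA_def by blast
      next
        case False then show ?thesis using w(7) q by simp
      qed
    qed
    then show ?thesis unfolding Fail_def using w by blast
  qed
qed

lemma Q1_loc: "(\<And>j. q - 1 \<le> j \<Longrightarrow> j \<le> q + 3 \<Longrightarrow> patch u z j = patch u z' j) \<Longrightarrow> Q1 u z q = Q1 u z' q"
  unfolding Q1_def by (rule Gm_local)

lemma actQ_loc: "(\<And>j. q - 2 \<le> j \<Longrightarrow> j \<le> q + 5 \<Longrightarrow> patch u z j = patch u z' j) \<Longrightarrow>
   act (Q1 u z) q = act (Q1 u z') q"
  by (rule act_local, rule Q1_loc) auto

lemma oddQ_loc: "(\<And>j. q - 1 \<le> j \<Longrightarrow> j \<le> q + 3 \<Longrightarrow> patch u z j = patch u z' j) \<Longrightarrow>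
   oddQ u z q = oddQ u z' q"
  unfolding oddQ_def using Q1_loc by metis

lemma F1_mono: assumes A: "\<And>q. q \<le> K \<Longrightarrow> act (Q1 u z) q = act (Q1 u z') q"
  and O: "\<And>q. q \<le> K \<Longrightarrow> oddQ u z q = oddQ u z' q" and f: "F1 u K z" shows "F1 u K z'"
proof -
  obtain i b where w: "cls u i" "cls u b" "i \<le> b" "b \<le> K" "oddQ u z i" "\<not> act (Q1 u z) b"
      "\<forall>q. cls u q \<and> q < i \<longrightarrow> act (Q1 u z) q" using f unfolding F1_def by blast
  have "oddQ u z' i" using w O[of i] by simp
  moreover have "\<not> act (Q1 u z') b" using w A[of b] by simp
  moreover have "\<forall>q. cls u q \<and> q < i \<longrightarrow> act (Q1 u z') q" using w A by force
  ultimately show ?thesis unfolding F1_def using w by blast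
qed

lemma F2_mono: assumes A: "\<And>q. q \<le> K \<Longrightarrow> act (Q1 u z) q = act (Q1 u z') q"
  and O: "\<And>q. q \<le> K \<Longrightarrow> oddQ u z q = oddQ u z' q" and f: "F2 u K z" shows "F2 u K z'"
proof -
  obtain i where w: "cls u i" "i \<le> K" "oddQ u z i"
      "\<forall>q. cls u q \<and> q < i \<longrightarrow> act (Q1 u z) q" using f unfolding F2_def by blast
  have "oddQ u z' i" using w O[of i] by simp
  moreover have "\<forall>q. cls u q \<and> q < i \<longrightarrow> act (Q1 u z') q" using w A by force
  ultimately show ?thesis unfolding F2_def using w by blast
qed

lemma By_mono: assumes A: "\<And>q. K < q \<Longrightarrow> act (Q1 u z) q = act (Q1 u z') q"
  and O: "\<And>q. K < q \<Longrightarrow> oddQ u z q = oddQ u z' q" and f: "By u K z" shows "By u K z'"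
proof -
  obtain i b where w: "cls u i" "cls u b" "K < i" "i \<le> b" "oddQ u z i" "\<not> act (Q1 u z) b"
      "\<forall>q. cls u q \<and> K < q \<and> q < i \<longrightarrow> act (Q1 u z) q" using f unfolding By_def by blast
  have "oddQ u z' i" using w O[of i] by simp
  moreover have "\<not> act (Q1 u z') b" using w A[of b] by simp
  moreover have "\<forall>q. cls u q \<and> K < q \<and> q < i \<longrightarrow> act (Q1 u z') q" using w A by force
  ultimately show ?thesis unfolding By_def using w by blast
qed

lemma low_cong: assumes "\<And>j. j \<le> K + 5 \<Longrightarrow> patch u z j = patch u z' j"
  shows "F1 u K z = F1 u K z'" "F2 u K z = F2 u K z'" "AA u K z = AA u K z'"
proof -
  have A: "act (Q1 u z) q = act (Q1 u z') q" if "q \<le> K" for q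
    by (rule actQ_loc) (use assms that in auto)
  have O: "oddQ u z q = oddQ u z' q" if "q \<le> K" for q
    by (rule oddQ_loc) (use assms that in auto)
  show "F1 u K z = F1 u K z'" using F1_mono[of K u z z'] F1_mono[of K u z' z] A O by metis
  show "F2 u K z = F2 u K z'" using F2_mono[of K u z z'] F2_mono[of K u z' z] A O by metis
  show "AA u K z = AA u K z'" unfolding AA_def using A by auto
qed

lemma high_cong: assumes "\<And>j. K - 1 \<le> j \<Longrightarrow> patch u z j = patch u z' j"
  shows "Bx u K z = Bx u K z'" "By u K z = By u K z'"
proof -
  have A: "act (Q1 u z) q = act (Q1 u z') q" if "K < q" for q
    by (rule actQ_loc) (use assms that in auto)
  have O: "oddQ u z q = oddQ u z' q" if "K < q" for q
    by (rule oddQ_loc) (use assms that in auto)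
  show "Bx u K z = Bx u K z'" unfolding Bx_def using A by auto
  show "By u K z = By u K z'" using By_mono[of K u z z'] By_mono[of K u z' z] A O by metis
qed



lemma nth_app_same: "length a = length b \<Longrightarrow> length a \<le> k \<Longrightarrow> (a @ c) ! k = (b @ c) ! k"
  by (simp add: nth_append)

lemma patch_low: "length x = i \<Longrightarrow> j < int i \<Longrightarrow> patch u (x @ y) j = patch u x j"
  by (auto simp: patch_def nth_append)

definition zz :: "nat \<Rightarrow> bool list \<Rightarrow> bool list \<Rightarrow> bool list" where
  "zz i tw y = replicate (i - length tw) False @ tw @ y"

lemma patch_high: assumes "length x = i" "int i - 8 \<le> j"
  shows "patch u (x @ y) j = patch u (zz i (drop (i - 8) x) y) j"
proof -
  have e1: "zz i (drop (i - 8) x) y = replicate (i - 8) False @ (drop (i - 8) x @ y)"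
    unfolding zz_def using assms(1) by simp
  have e2: "x @ y = take (i - 8) x @ (drop (i - 8) x @ y)" by simp
  have len: "length (x @ y) = length (zz i (drop (i - 8) x) y)" unfolding e1 using assms(1) by simp
  show ?thesis
  proof (cases "0 \<le> j \<and> j < int (length (x @ y))")
    case True
    have k: "i - 8 \<le> nat j" using True assms(2) by linarith
    have "(x @ y) ! nat j = (zz i (drop (i - 8) x) y) ! nat j"
      unfolding e1 by (subst e2, rule nth_app_same) (use assms(1) k in auto)
    then show ?thesis using True len by (simp add: patch_def)
  next
    case False
    moreover have "\<not> (0 \<le> j \<and> j < int (length (zz i (drop (i - 8) x) y)))"
      by (subst len[symmetric]) (rule False)
    ultimately show ?thesis unfolding patch_def by presburger
  qed
qed

definition hh :: "bool list \<Rightarrow> nat \<Rightarrow> (bool \<times> bool \<times> bool \<times> bool list) \<Rightarrow> bool list \<Rightarrow> bool" where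
  "hh u i s y = (case s of (f1, f2, aa, tw) \<Rightarrow>
     (\<not> T3 u \<or> \<not> (f1 \<or> (f2 \<and> Bx u (int i - 6) (zz i tw y)) \<or> (aa \<and> By u (int i - 6) (zz i tw y)))))"

definition al :: "bool list \<Rightarrow> nat \<Rightarrow> bool list \<Rightarrow> (bool \<times> bool \<times> bool \<times> bool list)" where
  "al u i x = (F1 u (int i - 6) x, F2 u (int i - 6) x, AA u (int i - 6) x, drop (i - 8) x)"

lemma SInv_split: assumes un: "u \<noteq> []" and l: "length x = i"
  shows "SInv 27 u (x @ y) = hh u i (al u i x) y"
proof -
  let ?K = "int i - 6"
  have lo: "patch u (x @ y) j = patch u x j" if "j \<le> ?K + 5" for j
    using patch_low[OF l] that by simp
  have hi: "patch u (x @ y) j = patch u (zz i (drop (i - 8) x) y) j" if "?K - 1 \<le> j" for j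
    using patch_high[OF l] that by simp
  note lc = low_cong[of ?K u "x @ y" x, OF lo]
  note hc = high_cong[of ?K u "x @ y" "zz i (drop (i - 8) x) y", OF hi]
  show ?thesis
    unfolding charac[OF un] decomp[of u "x @ y" ?K] hh_def al_def using lc hc by simp
qed

theorem mainTheorem12:
  fixes u :: "bool list"
  assumes "u \<noteq> []"
  shows "\<exists>C::nat. \<forall>n::nat. D (SInv 27 u) n \<le> C"
proof (intro exI allI)
  fix n :: nat
  show "D (SInv 27 u) n \<le> card MS + 1"
  proof (rule D_le)
    fix i assume "i < n"
    show "Dcut (SInv 27 u) n i \<le> card MS + 1"
    proof (rule cut_bound[where a = "al u i" and h = "hh u i"])
      show "finite MS" by (rule MS_fin)
      show "al u i x \<in> MS" if "length x = i" for x
        using that by (simp add: al_def MS_def)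
      show "SInv 27 u (x @ y) = hh u i (al u i x) y" if "length x = i" "length y = n - i" for x y
        by (rule SInv_split[OF assms that(1)])
    qed
  qed
qed


end
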